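(* Let $M\ge1$, $T\ge M$, $n\ge2$ be integers and $p=\frac1{M+1}$. Let $\mathbf{c}_1,\dots,\mathbf{c}_T\in\{0,1\}^n$ be random words whose $Tn$ bits are independent, each equal to $1$ with probability $p$. Let $E_{\mathrm{syn}}$ be the event that there exist $t\in\{1,\dots,T\}$, $d\in\{1,\dots,n-1\}$, a set $S\subseteq\{1,\dots,T\}\setminus\{t\}$ with $|S|=M-1$, and shifts $s_u\in\{0,\dots,n-1\}$ ($u\in S$) such that $\sigma_d(\mathbf{c}_t)\vee\bigvee_{u\in S}\sigma_{s_u}(\mathbf{c}_u)$ covers $\mathbf{c}_t$. Then \[\Pr(E_{\mathrm{syn}})\le\exp\!\Big(M\ln T+M\ln n-\tfrac{n}{M+1}\mathrm{e}^{-1}\Big).\]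
   Context: $\vee$ is componentwise Boolean OR (an empty OR is the all-zero vector). A vector $\mathbf{y}$ covers $\mathbf{z}$ if $y_i\ge z_i$ for all $i$. For $\mathbf{c}\in\{0,1\}^n$ and $s\in\{0,\dots,n-1\}$, $\sigma_s(\mathbf{c})$ is defined by $(\sigma_s(\mathbf{c}))_i=c_{i-s}$ if $i>s$ and $0$ otherwise. *)

theory Defs
  imports "HOL-Probability.Probability"
begin

text \<open>Binary words of length n are functions nat => bool, read on positions 1..n
  (True = bit 1). The shift: (sigma_s c)_i = c_(i-s) if i > s, else 0.\<close>
definition shiftw :: "nat \<Rightarrow> (nat \<Rightarrow> bool) \<Rightarrow> nat \<Rightarrow> bool" where
  "shiftw s c i = (s < i \<and> c (i - s))"

definition covers :: "nat \<Rightarrow> (nat \<Rightarrow> bool) \<Rightarrow> (nat \<Rightarrow> bool) \<Rightarrow> bool" where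
  "covers n y z = (\<forall>i\<in>{1..n}. z i \<longrightarrow> y i)"

definition bigor :: "'u set \<Rightarrow> ('u \<Rightarrow> nat \<Rightarrow> bool) \<Rightarrow> nat \<Rightarrow> bool" where
  "bigor S w i = (\<exists>u\<in>S. w u i)"

text \<open>The event E_syn for the family of words c (word t is \<lambda>i. c (t,i)).\<close>
definition E_syn :: "nat \<Rightarrow> nat \<Rightarrow> nat \<Rightarrow> (nat \<times> nat \<Rightarrow> bool) \<Rightarrow> bool" where
  "E_syn M T n c = (\<exists>t\<in>{1..T}. \<exists>d\<in>{1..n-1}. \<exists>S. S \<subseteq> {1..T} - {t} \<and> card S = M - 1 \<and>
     (\<exists>s. (\<forall>u\<in>S. s u \<in> {0..n-1}) \<and>
        covers n (\<lambda>i. shiftw d (\<lambda>j. c (t, j)) i \<or> bigor S (\<lambda>u. shiftw (s u) (\<lambda>j. c (u, j))) i)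
                 (\<lambda>j. c (t, j))))"

definition words_pmf :: "nat \<Rightarrow> nat \<Rightarrow> real \<Rightarrow> (nat \<times> nat \<Rightarrow> bool) pmf" where
  "words_pmf T n p = Pi_pmf ({1..T} \<times> {1..n}) False (\<lambda>_. bernoulli_pmf p)"

end

theory Submission
  imports Defs
begin

lemma seq_nn_bound:
  fixes Q :: "nat \<Rightarrow> 'a set" and \<Phi> :: "nat \<Rightarrow> ('a \<Rightarrow> 'b) \<Rightarrow> ennreal"
  assumes fin: "\<And>k. finite (Q k)" and mono: "\<And>k. Q k \<subseteq> Q (Suc k)"
   and init: "\<And>f. \<Phi> 0 f \<le> 1"
   and step: "\<And>k f. (\<integral>\<^sup>+g. \<Phi> (Suc k) (\<lambda>x. if x \<in> Q k then f x else g x) \<partial>Pi_pmf (Q (Suc k) - Q k) dflt pp) \<le> ennreal \<mu> * \<Phi> k f"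
  shows "(\<integral>\<^sup>+f. \<Phi> m f \<partial>Pi_pmf (Q m) dflt pp) \<le> ennreal \<mu> ^ m"
proof (induction m)
  case 0
  have "(\<integral>\<^sup>+f. \<Phi> 0 f \<partial>Pi_pmf (Q 0) dflt pp) \<le> (\<integral>\<^sup>+f. 1 \<partial>Pi_pmf (Q 0) dflt pp)"
    by (intro nn_integral_mono init)
  also have "\<dots> = 1" by (simp add: measure_pmf.emeasure_space_1)
  finally show ?case by simp
next
  case (Suc m)
  have U: "Q (Suc m) = Q m \<union> (Q (Suc m) - Q m)" using mono[of m] by blast
  have "Pi_pmf (Q (Suc m)) dflt pp = map_pmf (\<lambda>(f,g) x. if x \<in> Q m then f x else g x)
             (pair_pmf (Pi_pmf (Q m) dflt pp) (Pi_pmf (Q (Suc m) - Q m) dflt pp))"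
    by (subst U, rule Pi_pmf_union) (use fin in auto)
  hence "(\<integral>\<^sup>+f. \<Phi> (Suc m) f \<partial>Pi_pmf (Q (Suc m)) dflt pp)
     = (\<integral>\<^sup>+f. \<integral>\<^sup>+g. \<Phi> (Suc m) (\<lambda>x. if x \<in> Q m then f x else g x) \<partial>Pi_pmf (Q (Suc m) - Q m) dflt pp \<partial>Pi_pmf (Q m) dflt pp)"
    by (simp add: nn_integral_pair_pmf')
  also have "\<dots> \<le> (\<integral>\<^sup>+f. ennreal \<mu> * \<Phi> m f \<partial>Pi_pmf (Q m) dflt pp)"
    by (intro nn_integral_mono step)
  also have "\<dots> = ennreal \<mu> * (\<integral>\<^sup>+f. \<Phi> m f \<partial>Pi_pmf (Q m) dflt pp)"
    by (simp add: nn_integral_cmult)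
  also have "\<dots> \<le> ennreal \<mu> * ennreal \<mu> ^ m"
    by (intro mult_left_mono Suc.IH) auto
  finally show ?case by simp
qed

lemma step_calc2:
  assumes "finite N" "x0 \<in> N" "0 \<le> p" "p \<le> 1" "\<kappa> \<ge> 0"
  shows "(\<integral>\<^sup>+g. ennreal (if g x0 then \<kappa> else 1) \<partial>Pi_pmf N False (\<lambda>_. bernoulli_pmf p)) = ennreal (p*\<kappa> + (1-p))"
proof -
  have "(\<integral>\<^sup>+g. ennreal (if g x0 then \<kappa> else 1) \<partial>Pi_pmf N False (\<lambda>_. bernoulli_pmf p))
    = (\<integral>\<^sup>+b. ennreal (if b then \<kappa> else 1) \<partial>map_pmf (\<lambda>g. g x0) (Pi_pmf N False (\<lambda>_. bernoulli_pmf p)))"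
    by simp
  also have "map_pmf (\<lambda>g. g x0) (Pi_pmf N False (\<lambda>_. bernoulli_pmf p)) = bernoulli_pmf p"
    using assms by (simp add: Pi_pmf_component)
  moreover have "ennreal (p*\<kappa> + (1-p)) = ennreal \<kappa> * ennreal p + ennreal (1-p)"
    using assms by (subst ennreal_plus) (auto simp: ennreal_mult mult.commute)
  ultimately show ?thesis using assms by simp
qed

lemma prob_all_false:
  assumes "finite A" "X \<subseteq> A" "0 \<le> p" "p \<le> 1"
  shows "measure_pmf.prob (Pi_pmf A False (\<lambda>_. bernoulli_pmf p)) {f. \<forall>x\<in>X. \<not> f x} = (1-p) ^ card X"
proof -
  have "{f. \<forall>x\<in>X. \<not> f x} = Pi A (\<lambda>x. if x \<in> X then {False} else UNIV)"
    using assms(2) by (auto simp: Pi_def)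
  hence "measure_pmf.prob (Pi_pmf A False (\<lambda>_. bernoulli_pmf p)) {f. \<forall>x\<in>X. \<not> f x}
      = (\<Prod>x\<in>A. measure_pmf.prob (bernoulli_pmf p) (if x \<in> X then {False} else UNIV))"
    using assms by (simp add: measure_Pi_pmf_Pi)
  also have "\<dots> = (\<Prod>x\<in>A. if x \<in> X then 1 - p else 1)"
    using assms by (intro prod.cong) (auto simp: measure_pmf_single)
  also have "\<dots> = (1-p) ^ card X"
    using assms by (simp add: prod.If_cases Int_absorb1)
  finally show ?thesis .
qed

lemma step_calc1:
  assumes "finite N" "x0 \<in> N" "X \<subseteq> N" "x0 \<notin> X" "0 \<le> p" "p \<le> 1" "\<kappa> \<ge> 0"
  shows "(\<integral>\<^sup>+g. ennreal (if g x0 \<and> (\<forall>x\<in>X. \<not> g x) then 0 else (if g x0 then \<kappa> else 1)) \<partial>Pi_pmf N False (\<lambda>_. bernoulli_pmf p))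
     = ennreal (p*\<kappa>*(1 - (1-p)^card X) + (1-p))"
proof -
  let ?P = "Pi_pmf (N - {x0}) False (\<lambda>_. bernoulli_pmf p)"
  let ?A = "{f. \<forall>x\<in>X. \<not> f x}"
  have N: "N = insert x0 (N - {x0})" using assms by auto
  have "Pi_pmf N False (\<lambda>_. bernoulli_pmf p) = map_pmf (\<lambda>(y,f). f(x0:=y)) (pair_pmf (bernoulli_pmf p) ?P)"
    by (subst N, rule Pi_pmf_insert) (use assms in auto)
  hence "(\<integral>\<^sup>+g. ennreal (if g x0 \<and> (\<forall>x\<in>X. \<not> g x) then 0 else (if g x0 then \<kappa> else 1)) \<partial>Pi_pmf N False (\<lambda>_. bernoulli_pmf p))
     = (\<integral>\<^sup>+y. \<integral>\<^sup>+f. ennreal (if y \<and> (\<forall>x\<in>X. \<not> (f(x0:=y)) x) then 0 else (if y then \<kappa> else 1)) \<partial>?P \<partial>bernoulli_pmf p)"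
    by (simp only: nn_integral_map_pmf nn_integral_pair_pmf' prod.case fun_upd_same)
  also have "\<dots> = (\<integral>\<^sup>+y. (if y then ennreal \<kappa> * (\<integral>\<^sup>+f. indicator (UNIV - ?A) f \<partial>?P) else 1) \<partial>bernoulli_pmf p)"
  proof (intro nn_integral_cong)
    fix y :: bool
    show "(\<integral>\<^sup>+f. ennreal (if y \<and> (\<forall>x\<in>X. \<not> (f(x0:=y)) x) then 0 else (if y then \<kappa> else 1)) \<partial>?P)
       = (if y then ennreal \<kappa> * (\<integral>\<^sup>+f. indicator (UNIV - ?A) f \<partial>?P) else 1)"
    proof (cases y)
      case True
      have "(\<integral>\<^sup>+f. ennreal (if y \<and> (\<forall>x\<in>X. \<not> (f(x0:=y)) x) then 0 else (if y then \<kappa> else 1)) \<partial>?P)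
          = (\<integral>\<^sup>+f. ennreal \<kappa> * indicator (UNIV - ?A) f \<partial>?P)"
        using True assms(4) by (intro nn_integral_cong) (auto simp: indicator_def)
      then show ?thesis using True by (simp add: nn_integral_cmult)
    next
      case False
      then show ?thesis by (simp add: measure_pmf.emeasure_space_1)
    qed
  qed
  also have "(\<integral>\<^sup>+f. indicator (UNIV - ?A) f \<partial>?P) = ennreal (1 - (1-p)^card X)"
  proof -
    have "(\<integral>\<^sup>+f. indicator (UNIV - ?A) f \<partial>?P) = emeasure ?P (UNIV - ?A)" by simp
    also have "\<dots> = ennreal (measure_pmf.prob ?P (UNIV - ?A))"
      by (simp add: measure_pmf.emeasure_eq_measure)
    also have "measure_pmf.prob ?P (UNIV - ?A) = 1 - measure_pmf.prob ?P ?A"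
      using measure_pmf.prob_compl[of ?A ?P] by simp
    also have "measure_pmf.prob ?P ?A = (1-p)^card X"
      by (rule prob_all_false) (use assms in auto)
    finally show ?thesis .
  qed
  also have "(\<integral>\<^sup>+y. (if y then ennreal \<kappa> * ennreal (1 - (1-p)^card X) else 1) \<partial>bernoulli_pmf p)
       = ennreal \<kappa> * ennreal (1 - (1-p)^card X) * ennreal p + 1 * ennreal (1 - p)"
    using assms by (subst nn_integral_bernoulli_pmf) auto
  also have "\<dots> = ennreal (p*\<kappa>*(1 - (1-p)^card X) + (1-p))"
  proof -
    have "(1-p)^card X \<le> 1" using assms by (simp add: power_le_one)
    thus ?thesis using assms
      by (subst ennreal_plus) (auto simp: ennreal_mult[symmetric] mult.commute mult.left_commute)
  qed
  finally show ?thesis .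
qed

lemma ineq1:
  fixes p q :: real
  assumes "0 \<le> p" "p < 1" "0 \<le> q" "q \<le> 1"
  shows "p * (1/(1-p*q)) + (1-p) \<le> (1/(1-p*q)) * (1 - p*(1-p)*q)"
proof -
  have pq: "p*q < 1" using assms mult_left_le[of q p] by linarith
  hence "1 - p*q > 0" by simp
  thus ?thesis by (simp add: field_simps)
qed

lemma ineq2:
  fixes p q q' :: real
  assumes "0 \<le> p" "p < 1" "0 \<le> q" "q \<le> q'" "q' \<le> 1"
  shows "p * (1/(1-p*q)) * (1 - q') + (1-p) \<le> 1 - p*(1-p)*q"
proof -
  have pq: "p*q < 1" using assms mult_left_le[of q p] by linarith
  hence D: "1 - p*q > 0" by simp
  have "p * (1/(1-p*q)) * (1 - q') \<le> p * (1/(1-p*q)) * (1 - q)"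
    using assms D by (intro mult_left_mono) auto
  also have "(1 - q) \<le> (1-p*q)*(1-q+p*q)"
  proof -
    have "(1-p*q)*(1-q+p*q) - (1-q) = p*q*q*(1-p)" by (simp add: algebra_simps)
    moreover have "p*q*q*(1-p) \<ge> 0" using assms by simp
    ultimately show ?thesis by linarith
  qed
  hence "p * (1/(1-p*q)) * (1 - q) \<le> p * (1-q+p*q)"
    using D assms by (simp add: field_simps mult_left_mono)
  finally show ?thesis by (simp add: algebra_simps)
qed

definition Fk :: "nat \<Rightarrow> nat \<Rightarrow> nat set \<Rightarrow> (nat \<Rightarrow> nat) \<Rightarrow> nat \<Rightarrow> (nat \<times> nat \<Rightarrow> bool) \<Rightarrow> bool" where
  "Fk t d S s k c = (\<forall>i\<in>{1..k}. c (t,i) \<longrightarrow> (d < i \<and> c (t, i - d)) \<or> (\<exists>u\<in>S. s u < i \<and> c (u, i - s u)))"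

definition Win :: "nat \<Rightarrow> nat \<Rightarrow> nat set" where
  "Win d k = {j. 1 \<le> j \<and> j \<le> k \<and> k < j + d}"

definition Wt :: "nat \<Rightarrow> nat \<Rightarrow> real \<Rightarrow> nat \<Rightarrow> (nat \<times> nat \<Rightarrow> bool) \<Rightarrow> real" where
  "Wt t d \<kappa> k c = (\<Prod>j\<in>Win d k. if c (t,j) then \<kappa> else 1)"

definition Ok :: "nat \<Rightarrow> nat set \<Rightarrow> (nat \<Rightarrow> nat) \<Rightarrow> nat \<Rightarrow> (nat \<times> nat) set" where
  "Ok t S s k = {t} \<times> {1..k} \<union> (\<lambda>(u,i). (u, i - s u)) ` {(u,i). u \<in> S \<and> i \<in> {1..k} \<and> s u < i}"

lemma Ok_mem: "(a,b) \<in> Ok t S s k \<longleftrightarrow> (a = t \<and> 1 \<le> b \<and> b \<le> k) \<or> (a \<in> S \<and> 1 \<le> b \<and> b + s a \<le> k)"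
proof
  assume "(a,b) \<in> Ok t S s k"
  then consider "(a,b) \<in> {t} \<times> {1..k}" | "(a,b) \<in> (\<lambda>(u,i). (u, i - s u)) ` {(u,i). u \<in> S \<and> i \<in> {1..k} \<and> s u < i}"
    unfolding Ok_def by blast
  then show "(a = t \<and> 1 \<le> b \<and> b \<le> k) \<or> (a \<in> S \<and> 1 \<le> b \<and> b + s a \<le> k)"
  proof cases
    case 1 then show ?thesis by auto
  next
    case 2
    then obtain u i where "u \<in> S" "i \<in> {1..k}" "s u < i" "(a,b) = (u, i - s u)" by auto
    then show ?thesis by auto
  qed
next
  assume "(a = t \<and> 1 \<le> b \<and> b \<le> k) \<or> (a \<in> S \<and> 1 \<le> b \<and> b + s a \<le> k)"
  then show "(a,b) \<in> Ok t S s k"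
  proof
    assume "a = t \<and> 1 \<le> b \<and> b \<le> k"
    hence "(a,b) \<in> {t} \<times> {1..k}" by auto
    thus ?thesis unfolding Ok_def by (rule UnI1)
  next
    assume h: "a \<in> S \<and> 1 \<le> b \<and> b + s a \<le> k"
    have "(a,b) \<in> (\<lambda>(u,i). (u, i - s u)) ` {(u,i). u \<in> S \<and> i \<in> {1..k} \<and> s u < i}"
      by (rule image_eqI[where x="(a, b + s a)"]) (use h in auto)
    thus ?thesis unfolding Ok_def by (rule UnI2)
  qed
qed

lemma finite_Win[simp]: "finite (Win d k)"
  by (rule finite_subset[of _ "{..k}"]) (auto simp: Win_def)

lemma finite_Ok: "finite S \<Longrightarrow> finite (Ok t S s k)"
  unfolding Ok_def
  by (intro finite_UnI finite_imageI finite_cartesian_product)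
     (auto intro: finite_subset[of _ "S \<times> {1..k}"])

lemma Ok_mono: "Ok t S s k \<subseteq> Ok t S s (Suc k)"
  unfolding Ok_def by fastforce

lemma Fk_local:
  assumes "\<forall>x\<in>Ok t S s k. c x = c' x"
  shows "Fk t d S s k c = Fk t d S s k c'"
proof -
  have a: "c (t,i) = c' (t,i)" if "i \<in> {1..k}" for i
  proof -
    have "(t,i) \<in> Ok t S s k" using that by (simp add: Ok_def)
    thus ?thesis using assms by blast
  qed
  have b: "c (t,i-d) = c' (t,i-d)" if "i \<in> {1..k}" "d < i" for i
  proof -
    have "(t,i-d) \<in> {t}\<times>{1..k}" using that by auto
    hence "(t,i-d) \<in> Ok t S s k" unfolding Ok_def by (rule UnI1)
    thus ?thesis using assms by blast
  qed
  have e: "c (u,i - s u) = c' (u,i - s u)" if "i \<in> {1..k}" "u \<in> S" "s u < i" for i u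
  proof -
    have "(u, i - s u) \<in> (\<lambda>(u,i). (u, i - s u)) ` {(u,i). u \<in> S \<and> i \<in> {1..k} \<and> s u < i}"
      by (rule image_eqI[where x="(u,i)"]) (use that in auto)
    hence "(u, i - s u) \<in> Ok t S s k" unfolding Ok_def by (rule UnI2)
    thus ?thesis using assms by blast
  qed
  show ?thesis unfolding Fk_def using a b e by metis
qed

lemma Wt_local:
  assumes "\<forall>x\<in>Ok t S s k. c x = c' x"
  shows "Wt t d \<kappa> k c = Wt t d \<kappa> k c'"
  unfolding Wt_def
proof (intro prod.cong refl)
  fix j assume "j \<in> Win d k"
  hence "(t,j) \<in> {t}\<times>{1..k}" by (auto simp: Win_def)
  hence "(t,j) \<in> Ok t S s k" unfolding Ok_def by (rule UnI1)
  thus "(if c (t,j) then \<kappa> else 1) = (if c' (t,j) then \<kappa> else 1)" using assms by simp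
qed

lemma Fk_Suc: "Fk t d S s (Suc k) c = (Fk t d S s k c \<and> (c (t, Suc k) \<longrightarrow> (d < Suc k \<and> c (t, Suc k - d)) \<or> (\<exists>u\<in>S. s u < Suc k \<and> c (u, Suc k - s u))))"
  unfolding Fk_def by (auto simp: atLeastAtMostSuc_conv)

lemma Wt_Suc:
  assumes "d \<ge> 1"
  shows "Wt t d \<kappa> (Suc k) c = (if c (t, Suc k) then \<kappa> else 1) * (\<Prod>j\<in>Win d (Suc k) - {Suc k}. if c (t,j) then \<kappa> else 1)"
proof -
  have "Suc k \<in> Win d (Suc k)" using assms by (auto simp: Win_def)
  thus ?thesis unfolding Wt_def by (subst prod.remove) auto
qed

lemma Wt_prev:
  assumes "d \<ge> 1"
  shows "Wt t d \<kappa> k c = (if d \<le> k then (if c (t, Suc k - d) then \<kappa> else 1) else 1) * (\<Prod>j\<in>Win d (Suc k) - {Suc k}. if c (t,j) then \<kappa> else 1)"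
proof (cases "d \<le> k")
  case True
  have W: "Win d k = insert (Suc k - d) (Win d (Suc k) - {Suc k})" using True assms
    by (auto simp: Win_def)
  have "Suc k - d \<notin> Win d (Suc k) - {Suc k}" using True assms by (auto simp: Win_def)
  then show ?thesis using True unfolding Wt_def W by simp
next
  case False
  have W: "Win d k = Win d (Suc k) - {Suc k}" using False assms
    by (auto simp: Win_def)
  then show ?thesis using False unfolding Wt_def W by simp
qed

lemma Win_sub: "Win d (Suc k) - {Suc k} \<subseteq> {1..k}"
  unfolding Win_def by auto

lemma step_main:
  fixes p :: real
  assumes S: "finite S" "t \<notin> S" and d: "d \<ge> 1" and p: "0 \<le> p" "p < 1"
  defines "q \<equiv> (1-p)^card S"
  defines "\<kappa> \<equiv> 1/(1-p*q)"
  defines "\<mu> \<equiv> 1 - p*(1-p)*q"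
  shows "(\<integral>\<^sup>+g. ennreal (if Fk t d S s (Suc k) (\<lambda>x. if x \<in> Ok t S s k then f x else g x)
                 then Wt t d \<kappa> (Suc k) (\<lambda>x. if x \<in> Ok t S s k then f x else g x) else 0)
        \<partial>Pi_pmf (Ok t S s (Suc k) - Ok t S s k) False (\<lambda>_. bernoulli_pmf p))
     \<le> ennreal \<mu> * ennreal (if Fk t d S s k f then Wt t d \<kappa> k f else 0)"
proof -
  define N where "N = Ok t S s (Suc k) - Ok t S s k"
  define x0 where "x0 = (t, Suc k)"
  define X where "X = (\<lambda>u. (u, Suc k - s u)) ` {u\<in>S. s u < Suc k}"
  define h where "h = (\<lambda>g x. if x \<in> Ok t S s k then f x else g x)"
  define R where "R = (\<Prod>j\<in>Win d (Suc k) - {Suc k}. if f (t,j) then \<kappa> else 1)"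
  let ?P = "Pi_pmf N False (\<lambda>_. bernoulli_pmf p)"
  have q01: "0 \<le> q" "q \<le> 1" using p by (auto simp: q_def power_le_one)
  have pq: "p*q < 1" using p q01 mult_left_le[of q p] by linarith
  have k1: "\<kappa> \<ge> 1" using pq p q01 by (auto simp: \<kappa>_def field_simps)
  have R0: "R \<ge> 0" unfolding R_def using k1 by (intro prod_nonneg) auto
  have finN: "finite N" unfolding N_def using finite_Ok[OF S(1)] by auto
  have x0N: "x0 \<in> N" using S(2) by (simp add: N_def x0_def Ok_mem)
  have XN: "X \<subseteq> N"
  proof
    fix x assume "x \<in> X"
    then obtain u where u: "u \<in> S" "s u < Suc k" "x = (u, Suc k - s u)" by (auto simp: X_def)
    have "u \<noteq> t" using u S(2) by auto
    hence "x \<in> Ok t S s (Suc k)" "x \<notin> Ok t S s k" using u by (simp_all add: Ok_mem)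
    thus "x \<in> N" by (simp add: N_def)
  qed
  have x0X: "x0 \<notin> X" using S(2) by (auto simp: X_def x0_def)
  have cardX: "card X \<le> card S"
  proof -
    have "card X \<le> card {u\<in>S. s u < Suc k}" unfolding X_def using S(1) by (intro card_image_le) auto
    also have "\<dots> \<le> card S" using S(1) by (intro card_mono) auto
    finally show ?thesis .
  qed
  have mu0: "\<mu> \<ge> 0"
  proof -
    have "p*(1-p) \<le> 1" using p by (intro mult_le_one) auto
    hence "p*(1-p)*q \<le> 1" using q01 p by (intro mult_le_one) auto
    thus ?thesis by (simp add: \<mu>_def)
  qed
  have hN: "h g x = g x" if "x \<in> N" for g x using that by (simp add: h_def N_def)
  have hO: "h g x = f x" if "x \<in> Ok t S s k" for g x using that by (simp add: h_def)
  have Fh: "Fk t d S s k (h g) = Fk t d S s k f" for g by (rule Fk_local) (simp add: hO)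
  have Rh: "(\<Prod>j\<in>Win d (Suc k) - {Suc k}. if h g (t,j) then \<kappa> else 1) = R" for g
    unfolding R_def
  proof (intro prod.cong refl)
    fix j assume "j \<in> Win d (Suc k) - {Suc k}"
    hence "j \<in> {1..k}" using Win_sub by blast
    hence "(t,j) \<in> Ok t S s k" by (simp add: Ok_mem)
    thus "(if h g (t,j) then \<kappa> else 1) = (if f (t,j) then \<kappa> else 1)" by (simp add: hO)
  qed
  have hd: "h g (t, Suc k - d) = f (t, Suc k - d)" if "d \<le> k" for g
    using that d by (intro hO) (auto simp: Ok_mem)
  have hu: "h g (u, Suc k - s u) = g (u, Suc k - s u)" if "u \<in> S" "s u < Suc k" for g u
  proof (rule hN, rule subsetD[OF XN])
    show "(u, Suc k - s u) \<in> X" unfolding X_def using that by blast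
  qed
  have hX: "(\<exists>u\<in>S. s u < Suc k \<and> h g (u, Suc k - s u)) = (\<exists>x\<in>X. g x)" for g
    using hu unfolding X_def by auto
  have Phi: "(if Fk t d S s (Suc k) (h g) then Wt t d \<kappa> (Suc k) (h g) else 0)
     = (if Fk t d S s k f \<and> (g x0 \<longrightarrow> (d \<le> k \<and> f (t, Suc k - d)) \<or> (\<exists>x\<in>X. g x))
        then (if g x0 then \<kappa> else 1) * R else 0)" for g
    unfolding Fk_Suc Wt_Suc[OF d] Fh Rh hX using hN[OF x0N, of g] hd[of g]
    by (auto simp: x0_def less_Suc_eq_le)
  have lhs: "(\<integral>\<^sup>+g. ennreal (if Fk t d S s (Suc k) (h g) then Wt t d \<kappa> (Suc k) (h g) else 0) \<partial>?P)
      = (\<integral>\<^sup>+g. ennreal (if Fk t d S s k f \<and> (g x0 \<longrightarrow> (d \<le> k \<and> f (t, Suc k - d)) \<or> (\<exists>x\<in>X. g x))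
        then (if g x0 then \<kappa> else 1) * R else 0) \<partial>?P)"
    by (simp only: Phi)
  have main: "(\<integral>\<^sup>+g. ennreal (if Fk t d S s k f \<and> (g x0 \<longrightarrow> (d \<le> k \<and> f (t, Suc k - d)) \<or> (\<exists>x\<in>X. g x))
        then (if g x0 then \<kappa> else 1) * R else 0) \<partial>?P)
     \<le> ennreal \<mu> * ennreal (if Fk t d S s k f then Wt t d \<kappa> k f else 0)"
  proof (cases "Fk t d S s k f")
    case False
    then show ?thesis by simp
  next
    case FT: True
    show ?thesis
    proof (cases "d \<le> k \<and> f (t, Suc k - d)")
      case True
      have "(\<integral>\<^sup>+g. ennreal (if Fk t d S s k f \<and> (g x0 \<longrightarrow> (d \<le> k \<and> f (t, Suc k - d)) \<or> (\<exists>x\<in>X. g x))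
        then (if g x0 then \<kappa> else 1) * R else 0) \<partial>?P)
        = (\<integral>\<^sup>+g. ennreal R * ennreal (if g x0 then \<kappa> else 1) \<partial>?P)"
        using FT True R0 k1 by (intro nn_integral_cong) (auto simp: ennreal_mult' mult.commute)
      also have "\<dots> = ennreal R * ennreal (p*\<kappa> + (1-p))"
        using finN x0N p k1 by (simp add: nn_integral_cmult step_calc2)
      also have "\<dots> = ennreal (R * (p*\<kappa> + (1-p)))"
        using R0 p k1 by (simp add: ennreal_mult)
      also have "\<dots> \<le> ennreal (\<mu> * (\<kappa> * R))"
      proof (intro ennreal_leI)
        have "p*\<kappa> + (1-p) \<le> \<kappa> * \<mu>" using ineq1[OF p q01] by (simp add: \<kappa>_def \<mu>_def)
        hence "R * (p*\<kappa> + (1-p)) \<le> R * (\<kappa> * \<mu>)" using R0 by (rule mult_left_mono)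
        thus "R * (p*\<kappa> + (1-p)) \<le> \<mu> * (\<kappa> * R)" by (simp add: algebra_simps)
      qed
      also have "\<dots> = ennreal \<mu> * ennreal (if Fk t d S s k f then Wt t d \<kappa> k f else 0)"
      proof -
        note mu0
        moreover have "Wt t d \<kappa> k f = \<kappa> * R" using True unfolding Wt_prev[OF d] R_def by simp
        ultimately show ?thesis using FT k1 R0 by (simp add: ennreal_mult)
      qed
      finally show ?thesis .
    next
      case False
      have "(\<integral>\<^sup>+g. ennreal (if Fk t d S s k f \<and> (g x0 \<longrightarrow> (d \<le> k \<and> f (t, Suc k - d)) \<or> (\<exists>x\<in>X. g x))
        then (if g x0 then \<kappa> else 1) * R else 0) \<partial>?P)
        = (\<integral>\<^sup>+g. ennreal R * ennreal (if g x0 \<and> (\<forall>x\<in>X. \<not> g x) then 0 else (if g x0 then \<kappa> else 1)) \<partial>?P)"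
        using FT False R0 k1 by (intro nn_integral_cong) (auto simp: ennreal_mult' mult.commute)
      also have "\<dots> = ennreal R * ennreal (p*\<kappa>*(1 - (1-p)^card X) + (1-p))"
        using finN x0N XN x0X p k1 by (simp add: nn_integral_cmult step_calc1)
      also have "\<dots> = ennreal (R * (p*\<kappa>*(1 - (1-p)^card X) + (1-p)))"
      proof -
        have "(1-p)^card X \<le> 1" using p by (simp add: power_le_one)
        thus ?thesis using R0 p k1 by (simp add: ennreal_mult)
      qed
      also have "\<dots> \<le> ennreal (\<mu> * R)"
      proof (intro ennreal_leI)
        have qq: "q \<le> (1-p)^card X" unfolding q_def using p cardX by (intro power_decreasing) auto
        have "p*\<kappa>*(1 - (1-p)^card X) + (1-p) \<le> \<mu>"
          using ineq2[OF p q01(1) qq] p by (simp add: \<kappa>_def \<mu>_def power_le_one)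
        hence "R * (p*\<kappa>*(1 - (1-p)^card X) + (1-p)) \<le> R * \<mu>" using R0 by (rule mult_left_mono)
        thus "R * (p*\<kappa>*(1 - (1-p)^card X) + (1-p)) \<le> \<mu> * R" by (simp add: algebra_simps)
      qed
      also have "\<dots> = ennreal \<mu> * ennreal (if Fk t d S s k f then Wt t d \<kappa> k f else 0)"
      proof -
        note mu0
        moreover have "Wt t d \<kappa> k f = R" using False unfolding Wt_prev[OF d] R_def by auto
        ultimately show ?thesis using FT k1 R0 by (simp add: ennreal_mult)
      qed
      finally show ?thesis .
    qed
  qed
  show ?thesis using lhs main unfolding h_def N_def by simp
qed

lemma config_bound:
  fixes p :: real
  assumes S: "finite S" "t \<notin> S" "S \<subseteq> {1..T}" and t: "t \<in> {1..T}" and d: "d \<ge> 1"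
    and p: "0 \<le> p" "p < 1"
  shows "measure_pmf.prob (Pi_pmf ({1..T}\<times>{1..n}) False (\<lambda>_. bernoulli_pmf p)) {c. Fk t d S s n c}
     \<le> (1 - p*(1-p)*(1-p)^card S)^n"
proof -
  define q where "q = (1-p)^card S"
  define \<kappa> where "\<kappa> = 1/(1-p*q)"
  define \<mu> where "\<mu> = 1 - p*(1-p)*q"
  define \<Phi> where "\<Phi> = (\<lambda>k c. ennreal (if Fk t d S s k c then Wt t d \<kappa> k c else 0))"
  let ?I = "{1..T}\<times>{1..n}"
  let ?O = "Ok t S s n"
  let ?rs = "\<lambda>c x. if x \<in> ?O then c x else False"
  have q01: "0 \<le> q" "q \<le> 1" using p by (auto simp: q_def power_le_one)
  have pq: "p*q < 1" using p q01 mult_left_le[of q p] by linarith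
  have k1: "\<kappa> \<ge> 1" using pq p q01 by (auto simp: \<kappa>_def field_simps)
  have mu0: "\<mu> \<ge> 0"
  proof -
    have "p*(1-p) \<le> 1" using p by (intro mult_le_one) auto
    hence "p*(1-p)*q \<le> 1" using q01 p by (intro mult_le_one) auto
    thus ?thesis by (simp add: \<mu>_def)
  qed
  have OI: "?O \<subseteq> ?I"
  proof
    fix x assume "x \<in> ?O"
    then obtain a b where x: "x = (a,b)" "(a,b) \<in> ?O" by (cases x) auto
    thus "x \<in> ?I" using S(3) t by (auto simp: Ok_mem)
  qed
  have PO: "Pi_pmf ?O False (\<lambda>_. bernoulli_pmf p) = map_pmf ?rs (Pi_pmf ?I False (\<lambda>_. bernoulli_pmf p))"
    using OI by (intro Pi_pmf_subset) auto
  have pre: "?rs -` {c. Fk t d S s n c} = {c. Fk t d S s n c}"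
  proof -
    have "Fk t d S s n (?rs c) = Fk t d S s n c" for c by (rule Fk_local) auto
    thus ?thesis by auto
  qed
  have "measure_pmf.prob (Pi_pmf ?I False (\<lambda>_. bernoulli_pmf p)) {c. Fk t d S s n c}
      = measure_pmf.prob (Pi_pmf ?O False (\<lambda>_. bernoulli_pmf p)) {c. Fk t d S s n c}"
    unfolding PO measure_map_pmf pre ..
  also have "ennreal \<dots> = (\<integral>\<^sup>+c. indicator {c. Fk t d S s n c} c \<partial>Pi_pmf ?O False (\<lambda>_. bernoulli_pmf p))"
    by (simp add: measure_pmf.emeasure_eq_measure[symmetric])
  also have "\<dots> \<le> (\<integral>\<^sup>+c. \<Phi> n c \<partial>Pi_pmf ?O False (\<lambda>_. bernoulli_pmf p))"
  proof (intro nn_integral_mono)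
    fix c
    have "Wt t d \<kappa> n c \<ge> 1" unfolding Wt_def using k1 by (intro prod_ge_1) auto
    thus "indicator {c. Fk t d S s n c} c \<le> \<Phi> n c" by (auto simp: \<Phi>_def indicator_def)
  qed
  also have "\<dots> \<le> ennreal \<mu> ^ n"
  proof (rule seq_nn_bound[where Q="Ok t S s"])
    show "finite (Ok t S s k)" for k using finite_Ok[OF S(1)] .
    show "Ok t S s k \<subseteq> Ok t S s (Suc k)" for k by (rule Ok_mono)
    have W0: "Win d 0 = {}" unfolding Win_def by auto
    show "\<Phi> 0 f \<le> 1" for f by (simp add: \<Phi>_def Fk_def Wt_def W0)
    show "(\<integral>\<^sup>+g. \<Phi> (Suc k) (\<lambda>x. if x \<in> Ok t S s k then f x else g x) \<partial>Pi_pmf (Ok t S s (Suc k) - Ok t S s k) False (\<lambda>_. bernoulli_pmf p)) \<le> ennreal \<mu> * \<Phi> k f" for k f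
      unfolding \<Phi>_def \<kappa>_def \<mu>_def q_def by (rule step_main[OF S(1,2) d p])
  qed
  also have "\<dots> = ennreal (\<mu> ^ n)" using mu0 by (simp add: ennreal_power)
  finally have "measure_pmf.prob (Pi_pmf ?I False (\<lambda>_. bernoulli_pmf p)) {c. Fk t d S s n c} \<le> \<mu> ^ n"
    using mu0 by simp
  thus ?thesis by (simp add: \<mu>_def q_def mult.assoc)
qed

lemma union_bound_card:
  fixes P :: "'b pmf"
  assumes "finite I" "\<And>i. i \<in> I \<Longrightarrow> measure_pmf.prob P (X i) \<le> b"
  shows "measure_pmf.prob P (\<Union>i\<in>I. X i) \<le> real (card I) * b"
proof -
  have "measure_pmf.prob P (\<Union>i\<in>I. X i) \<le> (\<Sum>i\<in>I. measure_pmf.prob P (X i))"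
    using assms(1) by (intro measure_UNION_le) auto
  also have "\<dots> \<le> real (card I) * b" by (rule sum_bounded_above) (use assms(2) in auto)
  finally show ?thesis .
qed

lemma B0_bound:
  fixes M n :: nat
  assumes "M \<ge> 1"
  shows "(1 - (1/(real M+1))*(1 - 1/(real M+1))^M)^n \<le> exp (- (real n / (real M + 1) * exp (-1)))"
proof -
  define p where "p = 1/(real M+1)"
  define a where "a = p*(1-p)^M"
  have p: "0 < p" "p < 1" using assms by (auto simp: p_def field_simps)
  have a01: "0 \<le> a" "a \<le> 1" using p by (auto simp: a_def intro!: mult_le_one power_le_one)
  have e: "(1-p)^M \<ge> exp (-1)"
  proof -
    have Mp: "real M > 0" using assms by simp
    have i1: "1 - p = real M/(real M+1)" by (simp add: p_def field_simps)
    have i2: "1 + 1/real M = (real M+1)/real M" using Mp by (simp add: field_simps)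
    have inv: "(1-p) * (1 + 1/real M) = 1" unfolding i1 i2 using Mp by simp
    have "(1 + 1/real M)^M \<le> exp (1/real M)^M"
      using exp_ge_add_one_self[of "1/real M"] by (intro power_mono) auto
    also have "\<dots> = exp 1" using assms by (simp flip: exp_of_nat_mult)
    finally have le: "(1 + 1/real M)^M \<le> exp 1" .
    have pr: "(1-p)^M * (1 + 1/real M)^M = 1" by (simp flip: power_mult_distrib add: inv)
    have ypos: "(1 + 1/real M)^M > 0" using Mp by (simp add: add_pos_pos)
    have "(1-p)^M = 1 / (1 + 1/real M)^M" 
    proof (rule eq_divide_imp[OF _ pr])
      show "(1 + 1/real M)^M \<noteq> 0" using ypos by (metis less_irrefl)
    qed
    also have "\<dots> \<ge> 1 / exp 1" using le ypos by (intro divide_left_mono) auto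
    finally show ?thesis by (simp add: exp_minus field_simps)
  qed
  have "(1 - a)^n \<le> exp (-a)^n"
    using a01 by (intro power_mono) (auto simp: add.commute[of 1] exp_ge_add_one_self[of "-a", simplified])
  also have "\<dots> = exp (- (real n * a))" by (simp flip: exp_of_nat_mult)
  also have "\<dots> \<le> exp (- (real n * (p * exp (-1))))"
  proof -
    have "p * exp (-1) \<le> a" unfolding a_def using e p by (intro mult_left_mono) auto
    thus ?thesis by (intro exp_mono) (simp add: mult_left_mono)
  qed
  finally show ?thesis by (simp add: a_def p_def)
qed

theorem mainTheorem6:
  fixes M T n :: nat
  assumes "M \<ge> 1" and "T \<ge> M" and "n \<ge> 2"
  shows "measure_pmf.prob (words_pmf T n (1 / (real M + 1))) {c. E_syn M T n c}
     \<le> exp (real M * ln (real T) + real M * ln (real n) - real n / (real M + 1) * exp (-1))"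
proof -
  define p where "p = 1/(real M+1)"
  have p: "0 \<le> p" "p < 1" using assms(1) by (auto simp: p_def field_simps)
  define B0 where "B0 = (1 - p*(1-p)^M)^n"
  define Ss where "Ss = (\<lambda>t. {S. S \<subseteq> {1..T}-{t} \<and> card S = M-1})"
  define P where "P = words_pmf T n p"
  have P_def': "P = Pi_pmf ({1..T}\<times>{1..n}) False (\<lambda>_. bernoulli_pmf p)"
    by (simp add: P_def words_pmf_def)
  have finSs: "finite (Ss t)" for t
    unfolding Ss_def by (rule finite_subset[of _ "{S. S \<subseteq> {1..T}-{t}}"]) (auto intro: finite_Collect_subsets)
  have cardSs: "card (Ss t) = (T-1) choose (M-1)" if "t \<in> {1..T}" for t
  proof -
    have "card (Ss t) = card ({1..T}-{t}) choose (M-1)" unfolding Ss_def by (rule n_subsets) auto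
    also have "card ({1..T}-{t}) = T - 1" using that by simp
    finally show ?thesis .
  qed
  have cfg: "measure_pmf.prob P {c. Fk t d S s n c} \<le> B0"
    if t: "t \<in> {1..T}" and d: "d \<in> {1..n-1}" and S: "S \<in> Ss t" for t d S s
  proof -
    have S0: "S \<subseteq> {1..T}" using S by (auto simp: Ss_def)
    have S': "finite S" "t \<notin> S" "S \<subseteq> {1..T}" "card S = M-1"
      using S finite_subset[OF S0] by (auto simp: Ss_def)
    have "measure_pmf.prob P {c. Fk t d S s n c} \<le> (1 - p*(1-p)*(1-p)^card S)^n"
      unfolding P_def' by (rule config_bound[OF S'(1-3) t _ p]) (use d in auto)
    also have "p*(1-p)*(1-p)^card S = p*(1-p)^M"
    proof -
      have "M = Suc (M-1)" using assms(1) by simp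
      hence "(1-p)^M = (1-p)*(1-p)^(M-1)" by (metis power_Suc)
      thus ?thesis using S'(4) by simp
    qed
    finally show ?thesis by (simp add: B0_def)
  qed
  have sub: "{c. E_syn M T n c} \<subseteq> (\<Union>t\<in>{1..T}. \<Union>d\<in>{1..n-1}. \<Union>S\<in>Ss t. \<Union>s\<in>PiE S (\<lambda>_. {0..n-1}). {c. Fk t d S s n c})"
  proof
    fix c assume "c \<in> {c. E_syn M T n c}"
    then obtain t d S s where t: "t \<in> {1..T}" and d: "d \<in> {1..n-1}" and S: "S \<subseteq> {1..T} - {t}" "card S = M - 1"
      and s: "\<forall>u\<in>S. s u \<in> {0..n-1}"
      and cov: "covers n (\<lambda>i. shiftw d (\<lambda>j. c (t, j)) i \<or> bigor S (\<lambda>u. shiftw (s u) (\<lambda>j. c (u, j))) i) (\<lambda>j. c (t, j))"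
      unfolding E_syn_def by blast
    have SS: "S \<in> Ss t" using S by (simp add: Ss_def)
    have s': "restrict s S \<in> PiE S (\<lambda>_. {0..n-1})" using s by auto
    have F: "Fk t d S (restrict s S) n c"
      using cov unfolding Fk_def covers_def shiftw_def bigor_def by auto
    show "c \<in> (\<Union>t\<in>{1..T}. \<Union>d\<in>{1..n-1}. \<Union>S\<in>Ss t. \<Union>s\<in>PiE S (\<lambda>_. {0..n-1}). {c. Fk t d S s n c})"
      by (rule UN_I[OF t], rule UN_I[OF d], rule UN_I[OF SS], rule UN_I[OF s']) (simp add: F)
  qed
  have "measure_pmf.prob P {c. E_syn M T n c}
     \<le> measure_pmf.prob P (\<Union>t\<in>{1..T}. \<Union>d\<in>{1..n-1}. \<Union>S\<in>Ss t. \<Union>s\<in>PiE S (\<lambda>_. {0..n-1}). {c. Fk t d S s n c})"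
    by (rule measure_pmf.finite_measure_mono[OF sub]) simp
  also have "\<dots> \<le> real (card {1..T}) * (real (card {1..n-1}) * (real ((T-1) choose (M-1)) * (real (n^(M-1)) * B0)))"
  proof (rule union_bound_card, simp)
    fix t assume t: "t \<in> {1..T}"
    show "measure_pmf.prob P (\<Union>d\<in>{1..n-1}. \<Union>S\<in>Ss t. \<Union>s\<in>PiE S (\<lambda>_. {0..n-1}). {c. Fk t d S s n c})
       \<le> real (card {1..n-1}) * (real ((T-1) choose (M-1)) * (real (n^(M-1)) * B0))"
    proof (rule union_bound_card, simp)
      fix d assume d: "d \<in> {1..n-1}"
      have "measure_pmf.prob P (\<Union>S\<in>Ss t. \<Union>s\<in>PiE S (\<lambda>_. {0..n-1}). {c. Fk t d S s n c})
         \<le> real (card (Ss t)) * (real (n^(M-1)) * B0)"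
      proof (rule union_bound_card[OF finSs])
        fix S assume S: "S \<in> Ss t"
        have S0: "S \<subseteq> {1..T}" using S by (auto simp: Ss_def)
        have fS: "finite S" "card S = M-1"
          using S finite_subset[OF S0] by (auto simp: Ss_def)
        have cP: "card (PiE S (\<lambda>_. {0..n-1})) = n^(M-1)"
        proof -
          have "Suc (n - 1) = n" using assms(3) by simp
          thus ?thesis using fS by (simp add: card_PiE)
        qed
        show "measure_pmf.prob P (\<Union>s\<in>PiE S (\<lambda>_. {0..n-1}). {c. Fk t d S s n c}) \<le> real (n^(M-1)) * B0"
          using union_bound_card[of "PiE S (\<lambda>_. {0..n-1})" P "\<lambda>s. {c. Fk t d S s n c}" B0] cfg[OF t d S] fS cP
          by (simp add: finite_PiE)
      qed
      thus "measure_pmf.prob P (\<Union>S\<in>Ss t. \<Union>s\<in>PiE S (\<lambda>_. {0..n-1}). {c. Fk t d S s n c})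
         \<le> real ((T-1) choose (M-1)) * (real (n^(M-1)) * B0)"
        using cardSs[OF t] by simp
    qed
  qed
  also have "\<dots> = (real T * real (n-1) * real ((T-1) choose (M-1)) * real n^(M-1)) * B0"
    by simp
  also have "\<dots> \<le> (real T ^ M * real n ^ M) * exp (- (real n / (real M + 1) * exp (-1)))"
  proof (rule mult_mono)
    have C: "real ((T-1) choose (M-1)) \<le> real T ^ (M-1)"
    proof -
      have "(T-1) choose (M-1) \<le> (T-1)^(M-1)" using assms by (intro binomial_le_pow) simp
      also have "\<dots> \<le> T^(M-1)" by (intro power_mono) auto
      finally show ?thesis by (metis of_nat_le_iff of_nat_power)
    qed
    have TM: "real T * real T ^ (M-1) = real T ^ M"
      using assms(1) by (metis Suc_diff_1 less_le_trans power_Suc zero_less_one)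
    have nM: "real (n-1) * real n ^ (M-1) \<le> real n ^ M"
    proof -
      have "real (n-1) * real n ^ (M-1) \<le> real n * real n ^ (M-1)" by (intro mult_right_mono) auto
      also have "\<dots> = real n ^ M" using assms(1) by (metis Suc_diff_1 less_le_trans power_Suc zero_less_one)
      finally show ?thesis .
    qed
    have "real T * real (n-1) * real ((T-1) choose (M-1)) * real n^(M-1)
        = (real T * real ((T-1) choose (M-1))) * (real (n-1) * real n^(M-1))" by (simp add: algebra_simps)
    also have "\<dots> \<le> (real T * real T ^ (M-1)) * real n ^ M"
      using C nM by (intro mult_mono mult_left_mono) auto
    also have "\<dots> = real T ^ M * real n ^ M" using TM by simp
    finally show "real T * real (n-1) * real ((T-1) choose (M-1)) * real n^(M-1) \<le> real T ^ M * real n ^ M" .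
    show "B0 \<le> exp (- (real n / (real M + 1) * exp (-1)))"
      unfolding B0_def p_def using B0_bound[OF assms(1)] .
    show "0 \<le> B0" unfolding B0_def
    proof (rule zero_le_power)
      have "p*(1-p)^M \<le> 1" using p by (intro mult_le_one power_le_one) auto
      thus "0 \<le> 1 - p*(1-p)^M" by simp
    qed
    show "0 \<le> real T ^ M * real n ^ M" by simp
  qed
  also have "\<dots> = exp (real M * ln (real T) + real M * ln (real n) - real n / (real M + 1) * exp (-1))"
  proof -
    have T0: "real T > 0" using assms by simp
    have n0: "real n > 0" using assms by simp
    have "exp (real M * ln (real T)) = real T ^ M" using T0 by (simp add: exp_of_nat_mult)
    moreover have "exp (real M * ln (real n)) = real n ^ M" using n0 by (simp add: exp_of_nat_mult)
    ultimately show ?thesis by (simp add: exp_add exp_diff exp_minus field_simps)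
  qed
  finally show ?thesis by (simp add: P_def p_def)
qed

end
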